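(* For all integers $m\ge1$, $n,h,r\ge0$ and $0\le s\le n+h$, $$W_{m,r}(n+h,s)=\sum_{k=0}^n\sum_{j=0}^h\binom nk W_{m,r}(h,j)\,W_{m,r}(k,s-j)\,(jm)^{n-k},$$ with the conventions $0^0=1$ and $W_{m,r}(k,i)=0$ if $i<0$ or $i>k$.
   Context: For integers $m\ge1$, $n,k,r\ge0$, $W_{m,r}(n,k)$ denotes the $r$-Whitney number of the second kind, defined by $\sum_{n\ge k}W_{m,r}(n,k)\frac{z^n}{n!}=\frac{e^{rz}}{k!}\left(\frac{e^{mz}-1}{m}\right)^k$ (equivalently $(mx+r)^n=\sum_{k=0}^n m^kW_{m,r}(n,k)\,x(x-1)\cdots(x-k+1)$). *)

theory Defs
  imports "HOL-Computational_Algebra.Formal_Power_Series"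
begin

definition whitney2 :: "nat \<Rightarrow> nat \<Rightarrow> nat \<Rightarrow> nat \<Rightarrow> rat" where
  "whitney2 m r n k =
     fact n * fps_nth (fps_exp (of_nat r) * fps_const (1 / fact k)
        * ((fps_exp (of_nat m) - 1) / fps_const (of_nat m)) ^ k) n"

definition W :: "nat \<Rightarrow> nat \<Rightarrow> nat \<Rightarrow> int \<Rightarrow> rat" where
  "W m r n i = (if i < 0 \<or> i > int n then 0 else whitney2 m r n (nat i))"

end

theory Submission
  imports Defs
begin

lemma Pgen:
  fixes E D :: "rat fps" and a b :: rat
  assumes dE: "fps_deriv E = fps_const a * E" and dD: "fps_deriv D = 1 + fps_const b * D"
  shows "fps_deriv (fps_const (1 / fact (Suc l)) * (E * D ^ Suc l)) =
    fps_const (of_nat (Suc l) * b + a) * (fps_const (1 / fact (Suc l)) * (E * D ^ Suc l))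
    + fps_const (1 / fact l) * (E * D ^ l)"
proof -
  define c where "c = (1 / fact (Suc l) :: rat)"
  define A where "A = fps_const a"
  define B where "B = fps_const b"
  define C where "C = fps_const c"
  define N where "N = (fps_const (of_nat (Suc l)) :: rat fps)"
  have c: "c * of_nat (Suc l) = 1 / fact l" unfolding c_def by (simp add: field_simps del: of_nat_Suc)
  have CN: "C * N = fps_const (1 / fact l)" unfolding C_def N_def c[symmetric] by simp
  have K: "fps_const (of_nat (Suc l) * b + a) = N * B + A" unfolding N_def B_def A_def by simp
  have "fps_deriv (C * (E * D ^ Suc l)) =
     C * (A * E * D ^ Suc l + E * (N * (1 + B * D) * D ^ l))"
    unfolding C_def A_def B_def N_def
    by (simp only: fps_deriv_mult_const_left fps_deriv_mult fps_deriv_power dE dD diff_Suc_1 fps_deriv_const) (simp only: algebra_simps mult_1_left mult_1_right mult_zero_left mult_zero_right add_0_left add_0_right)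
  also have "\<dots> = (N * B + A) * (C * (E * D ^ Suc l)) + (C * N) * (E * D ^ l)"
    by (simp add: algebra_simps)
  finally have "fps_deriv (C * (E * D ^ Suc l)) = (N * B + A) * (C * (E * D ^ Suc l)) + fps_const (1 / fact l) * (E * D ^ l)" unfolding CN .
  then show ?thesis unfolding K C_def c_def .
qed

lemma Pderiv:
  fixes m r l :: nat
  assumes m: "m \<ge> 1"
  defines "D \<equiv> fps_const (inverse (of_nat m)) * (fps_exp (of_nat m) - 1 :: rat fps)"
  defines "P \<equiv> (\<lambda>k. fps_exp (of_nat r) * fps_const (1 / fact k) * D ^ k)"
  shows "fps_deriv (P (Suc l)) = fps_const (of_nat (Suc l) * of_nat m + of_nat r) * P (Suc l) + P l"
proof -
  have mi: "fps_const (of_nat m :: rat) * fps_const (inverse (of_nat m)) = 1"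
    using m by simp
  have "fps_deriv D = fps_const (inverse (of_nat m)) * (fps_const (of_nat m) * fps_exp (of_nat m))"
    unfolding D_def by simp
  also have "\<dots> = fps_exp (of_nat m)"
    using mi by (simp only: mult.assoc[symmetric] mult.commute[of "fps_const (inverse (of_nat m))"] mult_1_left)
  also have "\<dots> = 1 + fps_const (of_nat m) * D"
    unfolding D_def using mi by (simp only: mult.assoc[symmetric] mult_1_left) simp
  finally have dD: "fps_deriv D = 1 + fps_const (of_nat m) * D" .
  have PP: "P k = fps_const (1 / fact k) * (fps_exp (of_nat r) * D ^ k)" for k
    unfolding P_def by (simp only: mult_ac)
  show ?thesis unfolding PP by (rule Pgen) (simp_all add: dD)
qed

lemma wdef: "whitney2 m r n k = fact n * fps_nth (fps_exp (of_nat r) * fps_const (1 / fact k) *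
   (fps_const (inverse (of_nat m)) * (fps_exp (of_nat m) - 1 :: rat fps)) ^ k) n"
  by (simp add: whitney2_def)

lemma wshift: "whitney2 m r (Suc n) k = fact n * fps_nth (fps_deriv (fps_exp (of_nat r) * fps_const (1 / fact k) *
   (fps_const (inverse (of_nat m)) * (fps_exp (of_nat m) - 1 :: rat fps)) ^ k)) n"
  unfolding wdef fps_deriv_nth by (simp add: algebra_simps)

lemma wrec:
  assumes "m \<ge> 1"
  shows "whitney2 m r (Suc n) (Suc l) = whitney2 m r n l + (of_nat (Suc l) * of_nat m + of_nat r) * whitney2 m r n (Suc l)"
proof -
  define D where "D = fps_const (inverse (of_nat m)) * (fps_exp (of_nat m) - 1 :: rat fps)"
  define P where "P = (\<lambda>k. fps_exp (of_nat r) * fps_const (1 / fact k) * D ^ k)"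
  have w: "whitney2 m r n k = fact n * fps_nth (P k) n" for k n
    unfolding wdef P_def D_def ..
  have "whitney2 m r (Suc n) (Suc l) = fact n * fps_nth (fps_deriv (P (Suc l))) n"
    unfolding wshift P_def D_def ..
  also have "fps_deriv (P (Suc l)) = fps_const (of_nat (Suc l) * of_nat m + of_nat r) * P (Suc l) + P l"
    unfolding P_def D_def by (rule Pderiv[OF assms])
  finally show ?thesis
    by (simp only: fps_add_nth fps_mult_left_const_nth) (simp add: w algebra_simps)
qed

lemma wrec0:
  shows "whitney2 m r (Suc n) 0 = of_nat r * whitney2 m r n 0"
  unfolding wshift by (simp add: wdef algebra_simps)

lemma wbase: "whitney2 m r 0 k = (if k = 0 then 1 else 0)"
  by (cases k) (simp_all add: wdef)

lemma wvanish: "m \<ge> 1 \<Longrightarrow> n < k \<Longrightarrow> whitney2 m r n k = 0"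
proof (induction n arbitrary: k)
  case 0 then show ?case by (simp add: wbase)
next
  case (Suc n)
  then obtain l where l: "k = Suc l" by (cases k) auto
  show ?case using Suc by (simp add: l wrec)
qed

lemma Wnat: "m \<ge> 1 \<Longrightarrow> W m r n (int k) = whitney2 m r n k"
  by (auto simp: W_def wvanish)

lemma WZ: "i < 0 \<or> i > int n \<Longrightarrow> W m r n i = 0"
  by (simp add: W_def)

lemma W0: "m \<ge> 1 \<Longrightarrow> W m r 0 i = (if i = 0 then 1 else 0)"
  by (auto simp: W_def wbase)

lemma Wrec:
  assumes m: "m \<ge> 1"
  shows "W m r (Suc n) i = W m r n (i - 1) + (of_int i * of_nat m + of_nat r) * W m r n i"
proof (cases "i < 0")
  case True then show ?thesis by (simp add: WZ)
next
  case False
  then obtain k where k: "i = int k" by (metis nonneg_eq_int not_less)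
  show ?thesis
  proof (cases k)
    case 0 then show ?thesis using m Wnat[OF m, of r _ 0] by (simp add: k WZ wrec0)
  next
    case (Suc l)
    have e: "i - 1 = int l" using k Suc by simp
    show ?thesis unfolding e unfolding k Suc using m by (simp add: Wnat wrec del: of_nat_Suc)
  qed
qed

lemma main_gen:
  fixes m n h r :: nat
  assumes m: "m \<ge> 1"
  shows "\<forall>s::int. W m r (n + h) s =
    (\<Sum>k\<le>n. \<Sum>j\<le>h. of_nat (n choose k) * W m r h (int j) * W m r k (s - int j)
        * (of_nat (j * m)) ^ (n - k))"
proof (induction n)
  case 0
  show ?case
  proof
    fix s :: int
    have "(\<Sum>k\<le>0::nat. \<Sum>j\<le>h. of_nat (0 choose k) * W m r h (int j) * W m r k (s - int j)
        * (of_nat (j * m)) ^ (0 - k)) = (\<Sum>j\<le>h. W m r h (int j) * (if s = int j then 1 else 0))"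
      using m by (simp add: W0)
    also have "\<dots> = W m r h s"
    proof (cases "0 \<le> s \<and> s \<le> int h")
      case True
      then obtain t where t: "s = int t" "t \<le> h" by (metis nonneg_int_cases of_nat_le_iff)
      have "(\<Sum>j\<le>h. W m r h (int j) * (if s = int j then 1 else 0)) =
            (\<Sum>j\<le>h. (if j = t then W m r h (int j) else 0))"
        by (rule sum.cong) (auto simp: t)
      also have "\<dots> = W m r h s" using t by simp
      finally show ?thesis .
    next
      case False
      then have "W m r h s = 0" by (auto simp: WZ)
      moreover have "(\<Sum>j\<le>h. W m r h (int j) * (if s = int j then 1 else 0)) = 0"
        by (rule sum.neutral) (use False in auto)
      ultimately show ?thesis by simp
    qed
    finally show "W m r (0 + h) s = (\<Sum>k\<le>0::nat. \<Sum>j\<le>h. of_nat (0 choose k) * W m r h (int j) * W m r k (s - int j)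
        * (of_nat (j * m)) ^ (0 - k))" by simp
  qed
next
  case (Suc n)
  define a where "a = (\<lambda>j::nat. W m r h (int j))"
  define c where "c = (\<lambda>j::nat. (of_nat (j * m) :: rat))"
  define V where "V = W m r"
  define R where "R = (\<lambda>n s. (\<Sum>k\<le>n. \<Sum>j\<le>h. of_nat (n choose k) * a j * V k (s - int j) * c j ^ (n - k)))"
  have IH: "V (n + h) s = R n s" for s using Suc.IH unfolding R_def a_def c_def V_def by blast
  show ?case
  proof
    fix s :: int
    have S1: "R (Suc n) s = (\<Sum>j\<le>h. a j * V 0 (s - int j) * c j ^ Suc n)
       + (\<Sum>k\<le>n. \<Sum>j\<le>h. of_nat (n choose k) * a j * V (Suc k) (s - int j) * c j ^ (n - k))
       + (\<Sum>k\<le>n. \<Sum>j\<le>h. of_nat (n choose Suc k) * a j * V (Suc k) (s - int j) * c j ^ (n - k))"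
    proof -
      have "R (Suc n) s = (\<Sum>j\<le>h. a j * V 0 (s - int j) * c j ^ Suc n)
       + (\<Sum>k\<le>n. \<Sum>j\<le>h. of_nat (Suc n choose Suc k) * a j * V (Suc k) (s - int j) * c j ^ (n - k))"
        unfolding R_def by (subst sum.atMost_Suc_shift) simp
      also have "(\<Sum>k\<le>n. \<Sum>j\<le>h. of_nat (Suc n choose Suc k) * a j * V (Suc k) (s - int j) * c j ^ (n - k))
        = (\<Sum>k\<le>n. \<Sum>j\<le>h. of_nat (n choose k) * a j * V (Suc k) (s - int j) * c j ^ (n - k)
           + of_nat (n choose Suc k) * a j * V (Suc k) (s - int j) * c j ^ (n - k))"
        by (intro sum.cong refl) (simp add: algebra_simps)
      finally show ?thesis by (simp add: sum.distrib add.assoc)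
    qed
    have S2: "(\<Sum>j\<le>h. a j * V 0 (s - int j) * c j ^ Suc n)
       + (\<Sum>k\<le>n. \<Sum>j\<le>h. of_nat (n choose Suc k) * a j * V (Suc k) (s - int j) * c j ^ (n - k))
       = (\<Sum>k\<le>Suc n. \<Sum>j\<le>h. of_nat (n choose k) * a j * V k (s - int j) * c j ^ (Suc n - k))"
      by (subst sum.atMost_Suc_shift) simp
    also have "\<dots> = (\<Sum>k\<le>n. \<Sum>j\<le>h. of_nat (n choose k) * a j * V k (s - int j) * c j ^ (n - k) * c j)"
      by (auto simp: Suc_diff_le binomial_eq_0 algebra_simps intro!: sum.cong)
    finally have S2' : "(\<Sum>j\<le>h. a j * V 0 (s - int j) * c j ^ Suc n)
       + (\<Sum>k\<le>n. \<Sum>j\<le>h. of_nat (n choose Suc k) * a j * V (Suc k) (s - int j) * c j ^ (n - k))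
       = (\<Sum>k\<le>n. \<Sum>j\<le>h. of_nat (n choose k) * a j * V k (s - int j) * c j ^ (n - k) * c j)" .
    have S3: "(\<Sum>k\<le>n. \<Sum>j\<le>h. of_nat (n choose k) * a j * V (Suc k) (s - int j) * c j ^ (n - k))
       = (\<Sum>k\<le>n. \<Sum>j\<le>h. of_nat (n choose k) * a j * c j ^ (n - k) *
           (V k (s - 1 - int j) + (of_int (s - int j) * of_nat m + of_nat r) * V k (s - int j)))"
      unfolding V_def by (intro sum.cong refl) (simp add: Wrec[OF m] algebra_simps)
    have "R (Suc n) s = (\<Sum>k\<le>n. \<Sum>j\<le>h. of_nat (n choose k) * a j * c j ^ (n - k) *
           (V k (s - 1 - int j) + (of_int (s - int j) * of_nat m + of_nat r) * V k (s - int j)))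
         + (\<Sum>k\<le>n. \<Sum>j\<le>h. of_nat (n choose k) * a j * V k (s - int j) * c j ^ (n - k) * c j)"
      using S1 S2' S3 by linarith
    also have "\<dots> = (\<Sum>k\<le>n. \<Sum>j\<le>h. of_nat (n choose k) * a j * c j ^ (n - k) *
           (V k (s - 1 - int j) + (of_int (s - int j) * of_nat m + of_nat r) * V k (s - int j))
           + of_nat (n choose k) * a j * V k (s - int j) * c j ^ (n - k) * c j)"
      by (simp only: sum.distrib)
    also have "\<dots> = (\<Sum>k\<le>n. \<Sum>j\<le>h. of_nat (n choose k) * a j * V k (s - 1 - int j) * c j ^ (n - k)
           + (of_int s * of_nat m + of_nat r) * (of_nat (n choose k) * a j * V k (s - int j) * c j ^ (n - k)))"
      unfolding c_def by (intro sum.cong refl) (simp add: algebra_simps)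
    also have "\<dots> = R n (s - 1) + (of_int s * of_nat m + of_nat r) * R n s"
      unfolding R_def by (simp add: sum.distrib sum_distrib_left)
    also have "\<dots> = V (Suc n + h) s"
      using Wrec[OF m, of r "n + h" s] IH[of s] IH[of "s - 1"] unfolding V_def by simp
    finally show "W m r (Suc n + h) s = (\<Sum>k\<le>Suc n. \<Sum>j\<le>h. of_nat (Suc n choose k) * W m r h (int j) * W m r k (s - int j)
        * (of_nat (j * m)) ^ (Suc n - k))"
      unfolding R_def a_def c_def V_def by simp
  qed
qed

theorem mainTheorem6:
  fixes m n h r s :: nat
  assumes "m \<ge> 1" and "s \<le> n + h"
  shows "W m r (n + h) (int s) =
    (\<Sum>k=0..n. \<Sum>j=0..h. of_nat (n choose k) * W m r h (int j) * W m r k (int s - int j)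
        * (of_nat (j * m)) ^ (n - k))"
  using main_gen[OF assms(1), of r n h] by (simp add: atLeast0AtMost)

end
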